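(* If $b<0$, then $\ln\rho_t\sim bt$ as $t\to\infty$, where $\rho_t=v_{-t}(\lambda_0)$.
   Context: Let $\sigma\ge 0$, $b\in\mathbb R$, and $\pi$ a $\sigma$-finite measure on $(0,\infty)$ with $\int_0^\infty (z\wedge z^2)\pi(\mathrm{d}z)<\infty$; $\Psi(q)=bq+\frac12\sigma^2q^2+\int_0^\infty(e^{-qu}-1+qu)\pi(\mathrm{d}u)$. For $\lambda\ge 0$, $t\mapsto v_t(\lambda)$ solves $\frac{\partial}{\partial t}v_t(\lambda)=-\Psi(v_t(\lambda))$, $v_0(\lambda)=\lambda$; $v_{-t}$ denotes the inverse of the strictly increasing map $\lambda\mapsto v_t(\lambda)$. Let $\rho=\inf\{z>0:\Psi(z)\ge0\}$ ($\inf\emptyset=\infty$), and fix $\lambda_0\in(0,\rho)$. *)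

theory Defs
  imports "HOL-Analysis.Analysis" "HOL-Probability.Probability" "HOL-Library.Landau_Symbols"
begin

definition Psi :: "real \<Rightarrow> real \<Rightarrow> real measure \<Rightarrow> real \<Rightarrow> real" where
  "Psi b \<sigma> \<pi> q = b * q + (1/2) * \<sigma>\<^sup>2 * q\<^sup>2 + (\<integral>u. (exp (- q * u) - 1 + q * u) \<partial>\<pi>)"

definition rho_crit :: "real \<Rightarrow> real \<Rightarrow> real measure \<Rightarrow> ereal" where
  "rho_crit b \<sigma> \<pi> =
     (if {z. z > 0 \<and> Psi b \<sigma> \<pi> z \<ge> 0} = {} then \<infinity>
      else ereal (Inf {z. z > 0 \<and> Psi b \<sigma> \<pi> z \<ge> 0}))"

text \<open>v_{-t}: inverse of the strictly increasing map lambda \<mapsto> v_t(lambda) on [0,\<infinity>).\<close>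
definition v_inv :: "(real \<Rightarrow> real \<Rightarrow> real) \<Rightarrow> real \<Rightarrow> real \<Rightarrow> real" where
  "v_inv v t \<mu> = (THE l. l \<ge> 0 \<and> v t l = \<mu>)"

end

theory Submission
  imports Defs "HOL-Library.Landau_Symbols"
begin

lemma deriv_ge:
  fixes f f' :: "real \<Rightarrow> real"
  assumes "a \<le> b"
    and d: "\<And>x. a \<le> x \<Longrightarrow> x \<le> b \<Longrightarrow> (f has_real_derivative f' x) (at x within {a..b})"
    and k: "\<And>x. a \<le> x \<Longrightarrow> x \<le> b \<Longrightarrow> k \<le> f' x"
  shows "k * (b - a) \<le> f b - f a"
proof -
  have "\<exists>x\<in>{a..b}. f b - f a = f' x * (b - a)"
    using mvt_very_simple[OF assms(1), of f "\<lambda>x. (*) (f' x)"] d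
    by (simp add: has_field_derivative_def)
  then obtain x where x: "x \<in> {a..b}" "f b - f a = f' x * (b - a)" by blast
  then show ?thesis using k[of x] assms(1) by (simp add: mult_right_mono)
qed

lemma deriv_le:
  fixes f f' :: "real \<Rightarrow> real"
  assumes "a \<le> b"
    and d: "\<And>x. a \<le> x \<Longrightarrow> x \<le> b \<Longrightarrow> (f has_real_derivative f' x) (at x within {a..b})"
    and k: "\<And>x. a \<le> x \<Longrightarrow> x \<le> b \<Longrightarrow> f' x \<le> k"
  shows "f b - f a \<le> k * (b - a)"
proof -
  have "\<exists>x\<in>{a..b}. f b - f a = f' x * (b - a)"
    using mvt_very_simple[OF assms(1), of f "\<lambda>x. (*) (f' x)"] d
    by (simp add: has_field_derivative_def)
  then obtain x where x: "x \<in> {a..b}" "f b - f a = f' x * (b - a)" by blast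
  then show ?thesis using k[of x] assms(1) by (simp add: mult_right_mono)
qed

definition odesol :: "(real \<Rightarrow> real) \<Rightarrow> (real \<Rightarrow> real) \<Rightarrow> bool" where
  "odesol P w \<longleftrightarrow> (\<forall>s\<ge>0. (w has_real_derivative (- P (w s))) (at s within {0..}))"

lemma odesol_D:
  assumes "odesol P w" "0 \<le> a" "a \<le> x" "x \<le> b"
  shows "(w has_real_derivative (- P (w x))) (at x within {a..b})"
proof -
  have "(w has_real_derivative (- P (w x))) (at x within {0..})"
    using assms unfolding odesol_def by simp
  then show ?thesis by (rule DERIV_subset) (use assms in auto)
qed

lemma odesol_cont:
  assumes "odesol P w"
  shows "continuous_on {0..} w"
  by (rule DERIV_continuous_on[of _ _ "\<lambda>s. - P (w s)"]) (use assms in \<open>simp add: odesol_def\<close>)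

lemma odesol_ln_D:
  assumes "odesol P w" "0 \<le> a" "a \<le> x" "x \<le> b" "w x > 0"
  shows "((\<lambda>s. ln (w s)) has_real_derivative (- P (w x) / w x)) (at x within {a..b})"
proof -
  have "((\<lambda>s. ln (w s)) has_real_derivative (1 / w x) * (- P (w x))) (at x within {a..b})"
    by (rule DERIV_chain2[OF DERIV_ln_divide[OF assms(5)] odesol_D[OF assms(1-4)]])
  then show ?thesis by simp
qed

lemma ln_le:
  assumes "odesol P w" "0 \<le> a" "a \<le> b" "\<And>s. a \<le> s \<Longrightarrow> s \<le> b \<Longrightarrow> w s > 0"
    "\<And>s. a \<le> s \<Longrightarrow> s \<le> b \<Longrightarrow> - P (w s) / w s \<le> k"
  shows "ln (w b) - ln (w a) \<le> k * (b - a)"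
  by (rule deriv_le[where f' = "\<lambda>s. - P (w s) / w s"]) (use assms odesol_ln_D[OF assms(1)] in auto)

lemma ln_ge:
  assumes "odesol P w" "0 \<le> a" "a \<le> b" "\<And>s. a \<le> s \<Longrightarrow> s \<le> b \<Longrightarrow> w s > 0"
    "\<And>s. a \<le> s \<Longrightarrow> s \<le> b \<Longrightarrow> k \<le> - P (w s) / w s"
  shows "k * (b - a) \<le> ln (w b) - ln (w a)"
  by (rule deriv_ge[where f' = "\<lambda>s. - P (w s) / w s"]) (use assms odesol_ln_D[OF assms(1)] in auto)

lemma lin_ge:
  assumes "odesol P w" "0 \<le> a" "a \<le> b"
    "\<And>s. a \<le> s \<Longrightarrow> s \<le> b \<Longrightarrow> k \<le> - P (w s)"
  shows "k * (b - a) \<le> w b - w a"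
  by (rule deriv_ge[where f' = "\<lambda>s. - P (w s)"]) (use assms odesol_D[OF assms(1)] in auto)

lemma deriv_ge_open:
  fixes f f' :: "real \<Rightarrow> real"
  assumes "a < b"
    and d: "\<And>x. a \<le> x \<Longrightarrow> x \<le> b \<Longrightarrow> (f has_real_derivative f' x) (at x within {a..b})"
    and k: "\<And>x. a < x \<Longrightarrow> x < b \<Longrightarrow> k \<le> f' x"
  shows "k * (b - a) \<le> f b - f a"
proof -
  have "\<exists>x\<in>{a<..<b}. f b - f a = f' x * (b - a)"
    using mvt_simple[OF assms(1), of f "\<lambda>x. (*) (f' x)"] d
    by (simp add: has_field_derivative_def)
  then obtain x where x: "x \<in> {a<..<b}" "f b - f a = f' x * (b - a)" by blast
  then show ?thesis using k[of x] assms(1) by (simp add: mult_right_mono)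
qed

lemma stay_above:
  assumes sol: "odesol P w" and s0: "0 \<le> s0" "s0 \<le> s1" and c: "0 < c" "c \<le> w s0"
    and neg: "\<And>z. 0 < z \<Longrightarrow> z < c \<Longrightarrow> P z < 0"
  shows "c \<le> w s1"
proof (rule ccontr)
  assume "\<not> c \<le> w s1"
  hence lt: "w s1 < c" by simp
  have cont: "continuous_on {s0..s1} w"
    using odesol_cont[OF sol] by (rule continuous_on_subset) (use s0 in auto)
  define S where "S = {s0..s1} \<inter> w -` {c..}"
  have clS: "closed S" unfolding S_def
    by (rule continuous_closed_preimage[OF cont]) auto
  have s0S: "s0 \<in> S" using c s0 by (auto simp: S_def)
  have bdd: "bdd_above S" by (rule bdd_aboveI[of _ s1]) (auto simp: S_def)
  define m where "m = Sup S"
  have mS: "m \<in> S" unfolding m_def using closed_contains_Sup[OF _ bdd clS] s0S by blast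
  hence m1: "s0 \<le> m" "m \<le> s1" "c \<le> w m" by (auto simp: S_def)
  have m2: "m < s1" using m1 lt by (metis order.not_eq_order_implies_strict not_le)
  have above: "w x < c" if "m < x" "x \<le> s1" for x
  proof (rule ccontr)
    assume "\<not> w x < c"
    hence "x \<in> S" using that m1 by (auto simp: S_def)
    hence "x \<le> m" unfolding m_def by (rule cSup_upper[OF _ bdd])
    thus False using that by simp
  qed
  obtain d where d: "d > 0" "\<And>x. x \<in> {s0..s1} \<Longrightarrow> dist x m < d \<Longrightarrow> dist (w x) (w m) < c"
    using cont m1 c unfolding continuous_on_iff by (metis atLeastAtMost_iff)
  define s' where "s' = min (m + d/2) s1"
  have s': "m < s'" "s' \<le> s1" using d m2 by (auto simp: s'_def)
  have "0 * (s' - m) \<le> w s' - w m"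
  proof (rule deriv_ge_open[where f' = "\<lambda>x. - P (w x)"])
    show "m < s'" by fact
    fix x assume "m \<le> x" "x \<le> s'"
    then show "(w has_real_derivative - P (w x)) (at x within {m..s'})"
      using m1 s0 by (intro odesol_D[OF sol]) auto
  next
    fix x assume x: "m < x" "x < s'"
    have "dist x m < d" using x d by (auto simp: s'_def dist_real_def)
    hence "dist (w x) (w m) < c" using d(2)[of x] x m1 s' by auto
    hence "w x > 0" using m1 by (auto simp: dist_real_def)
    moreover have "w x < c" using above[of x] x s' by auto
    ultimately show "0 \<le> - P (w x)" using neg[of "w x"] by auto
  qed
  thus False using above[of s'] s' m1 by auto
qed

lemma ln_upper:
  assumes sol: "odesol P w" and lb: "\<And>z. 0 < z \<Longrightarrow> B * z \<le> P z"
    and "0 \<le> a" "a \<le> c" "\<And>s. a \<le> s \<Longrightarrow> s \<le> c \<Longrightarrow> w s > 0"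
  shows "ln (w c) - ln (w a) \<le> - B * (c - a)"
proof (rule ln_le[OF sol assms(3,4,5)])
  fix s assume "a \<le> s" "s \<le> c"
  hence p: "w s > 0" using assms(5) by auto
  have "B * w s \<le> P (w s)" using lb[OF p] .
  then show "- P (w s) / w s \<le> - B" using p by (simp add: divide_simps)
qed

lemma pos_back:
  assumes sol: "odesol P w" and lb: "\<And>z. 0 < z \<Longrightarrow> B * z \<le> P z" and B: "B \<le> 0"
    and t: "0 \<le> s" "s \<le> t" and wt: "w t > 0"
  shows "w s > 0"
proof (rule ccontr)
  assume "\<not> w s > 0"
  have cont: "continuous_on {0..t} w"
    using odesol_cont[OF sol] by (rule continuous_on_subset) auto
  define S where "S = {0..t} \<inter> w -` {..0}"
  have clS: "closed S" unfolding S_def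
    by (rule continuous_closed_preimage[OF cont]) auto
  have sS: "s \<in> S" using \<open>\<not> w s > 0\<close> t by (auto simp: S_def)
  have bdd: "bdd_above S" by (rule bdd_aboveI[of _ t]) (auto simp: S_def)
  define m where "m = Sup S"
  have mS: "m \<in> S" unfolding m_def using closed_contains_Sup[OF _ bdd clS] sS by blast
  hence m1: "0 \<le> m" "m \<le> t" "w m \<le> 0" by (auto simp: S_def)
  have m2: "m < t" using m1 wt by (metis order.not_eq_order_implies_strict not_le)
  have posr: "w x > 0" if "m < x" "x \<le> t" for x
  proof (rule ccontr)
    assume "\<not> w x > 0"
    hence "x \<in> S" using that m1 by (auto simp: S_def)
    hence "x \<le> m" unfolding m_def by (rule cSup_upper[OF _ bdd])
    thus False using that by simp
  qed
  define \<kappa> where "\<kappa> = exp (ln (w t) + B * t)"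
  have kpos: "\<kappa> > 0" by (simp add: \<kappa>_def)
  have lbx: "\<kappa> \<le> w x" if "m < x" "x \<le> t" for x
  proof -
    have "ln (w t) - ln (w x) \<le> - B * (t - x)"
      using that m1 posr by (intro ln_upper[OF sol lb]) auto
    moreover have "- B * (t - x) \<le> - B * t" using mult_nonpos_nonneg[of B x] B that m1 by (simp add: right_diff_distrib)
    ultimately have "ln (w t) + B * t \<le> ln (w x)" by simp
    hence "\<kappa> \<le> exp (ln (w x))" unfolding \<kappa>_def by simp
    thus ?thesis using posr[OF that] by simp
  qed
  obtain d where d: "d > 0" "\<And>x. x \<in> {0..t} \<Longrightarrow> dist x m < d \<Longrightarrow> dist (w x) (w m) < \<kappa>"
    using cont m1 kpos unfolding continuous_on_iff by (metis atLeastAtMost_iff)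
  define x where "x = min (m + d/2) t"
  have x: "m < x" "x \<le> t" using d m2 by (auto simp: x_def)
  have "dist x m < d" using x d by (auto simp: x_def dist_real_def)
  hence "dist (w x) (w m) < \<kappa>" using d(2)[of x] x m1 by auto
  hence "w x < \<kappa>" using m1 by (auto simp: dist_real_def)
  thus False using lbx[OF x] by simp
qed

lemma gronwall:
  assumes sol1: "odesol P w1" and sol2: "odesol P w2" and t: "0 \<le> t" and L: "0 \<le> L"
    and lip: "\<And>s. 0 \<le> s \<Longrightarrow> s \<le> t \<Longrightarrow> \<bar>P (w1 s) - P (w2 s)\<bar> \<le> L * \<bar>w1 s - w2 s\<bar>"
  shows "(w1 t - w2 t)\<^sup>2 \<le> exp (2 * L * t) * (w1 0 - w2 0)\<^sup>2"
    and "(w1 0 - w2 0)\<^sup>2 \<le> exp (2 * L * t) * (w1 t - w2 t)\<^sup>2"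
proof -
  have key0: "\<bar>(w1 x - w2 x) * (P (w1 x) - P (w2 x))\<bar> \<le> L * (w1 x - w2 x)\<^sup>2"
    if "0 \<le> x" "x \<le> t" for x
  proof -
    have "\<bar>(w1 x - w2 x) * (P (w1 x) - P (w2 x))\<bar> = \<bar>w1 x - w2 x\<bar> * \<bar>P (w1 x) - P (w2 x)\<bar>"
      by (rule abs_mult)
    also have "\<dots> \<le> \<bar>w1 x - w2 x\<bar> * (L * \<bar>w1 x - w2 x\<bar>)"
      by (rule mult_left_mono[OF lip[OF that]]) simp
    also have "\<dots> = L * (w1 x - w2 x)\<^sup>2" by (simp add: power2_eq_square abs_mult_self_eq)
    finally show ?thesis .
  qed
  have key: "(w1 x - w2 x) * (- P (w1 x) + P (w2 x)) \<le> L * (w1 x - w2 x)\<^sup>2"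
    and key2: "(w1 x - w2 x) * (P (w1 x) - P (w2 x)) \<le> L * (w1 x - w2 x)\<^sup>2"
    if "0 \<le> x" "x \<le> t" for x
  proof -
    have e: "(w1 x - w2 x) * (- P (w1 x) + P (w2 x)) = - ((w1 x - w2 x) * (P (w1 x) - P (w2 x)))"
      by (simp add: algebra_simps)
    show "(w1 x - w2 x) * (- P (w1 x) + P (w2 x)) \<le> L * (w1 x - w2 x)\<^sup>2"
      unfolding e using key0[OF that] by linarith
    show "(w1 x - w2 x) * (P (w1 x) - P (w2 x)) \<le> L * (w1 x - w2 x)\<^sup>2"
      using key0[OF that] by linarith
  qed
  have "(w1 t - w2 t)\<^sup>2 * exp (- 2 * L * t) - (w1 0 - w2 0)\<^sup>2 * exp (- 2 * L * 0) \<le> 0 * (t - 0)"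
  proof (rule deriv_le[where f = "\<lambda>s. (w1 s - w2 s)\<^sup>2 * exp (- 2 * L * s)"
        and f' = "\<lambda>x. 2 * (w1 x - w2 x) * (- P (w1 x) + P (w2 x)) * exp (- 2 * L * x)
           + (w1 x - w2 x)\<^sup>2 * (exp (- 2 * L * x) * (- 2 * L))"])
    show "0 \<le> t" by fact
    fix x assume x: "0 \<le> x" "x \<le> t"
    note d1 = odesol_D[OF sol1 order.refl x] and d2 = odesol_D[OF sol2 order.refl x]
    show "((\<lambda>s. (w1 s - w2 s)\<^sup>2 * exp (- 2 * L * s)) has_real_derivative
        2 * (w1 x - w2 x) * (- P (w1 x) + P (w2 x)) * exp (- 2 * L * x)
           + (w1 x - w2 x)\<^sup>2 * (exp (- 2 * L * x) * (- 2 * L))) (at x within {0..t})"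
    proof -
      have dd: "((\<lambda>s. w1 s - w2 s) has_real_derivative (- P (w1 x) - - P (w2 x))) (at x within {0..t})"
        by (rule DERIV_diff[OF d1 d2])
      have sq: "((\<lambda>s. (w1 s - w2 s)\<^sup>2) has_real_derivative (of_nat 2 * ((- P (w1 x) - - P (w2 x)) * (w1 x - w2 x) ^ (2 - Suc 0)))) (at x within {0..t})"
        by (rule DERIV_power[OF dd])
      have ex: "((\<lambda>s. exp (- 2 * L * s)) has_real_derivative exp (- 2 * L * x) * (- 2 * L)) (at x within {0..t})"
        by (auto intro!: derivative_eq_intros)
      show ?thesis
        by (rule DERIV_cong[OF DERIV_mult[OF sq ex]]) (simp add: algebra_simps)
    qed
    have "2 * (w1 x - w2 x) * (- P (w1 x) + P (w2 x)) \<le> 2 * L * (w1 x - w2 x)\<^sup>2"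
    proof -
      have "2 * ((w1 x - w2 x) * (- P (w1 x) + P (w2 x))) \<le> 2 * (L * (w1 x - w2 x)\<^sup>2)" using key[OF x] by linarith
      thus ?thesis by (simp only: mult.assoc)
    qed
    hence "2 * (w1 x - w2 x) * (- P (w1 x) + P (w2 x)) * exp (- 2 * L * x)
        \<le> 2 * L * (w1 x - w2 x)\<^sup>2 * exp (- 2 * L * x)"
      by (rule mult_right_mono) simp
    then show "2 * (w1 x - w2 x) * (- P (w1 x) + P (w2 x)) * exp (- 2 * L * x)
           + (w1 x - w2 x)\<^sup>2 * (exp (- 2 * L * x) * (- 2 * L)) \<le> 0"
      by (simp add: algebra_simps)
  qed
  hence "(w1 t - w2 t)\<^sup>2 * exp (- 2 * L * t) * exp (2 * L * t) \<le> (w1 0 - w2 0)\<^sup>2 * exp (2 * L * t)"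
    by (intro mult_right_mono) auto
  moreover have "exp (- 2 * L * t) * exp (2 * L * t) = 1" by (simp flip: exp_add)
  ultimately have "(w1 t - w2 t)\<^sup>2 * 1 \<le> (w1 0 - w2 0)\<^sup>2 * exp (2 * L * t)"
    by (metis mult.assoc)
  then show "(w1 t - w2 t)\<^sup>2 \<le> exp (2 * L * t) * (w1 0 - w2 0)\<^sup>2"
    by (simp only: mult_1_right mult.commute)
  have "0 * (t - 0) \<le> (w1 t - w2 t)\<^sup>2 * exp (2 * L * t) - (w1 0 - w2 0)\<^sup>2 * exp (2 * L * 0)"
  proof (rule deriv_ge[where f = "\<lambda>s. (w1 s - w2 s)\<^sup>2 * exp (2 * L * s)"
        and f' = "\<lambda>x. 2 * (w1 x - w2 x) * (- P (w1 x) + P (w2 x)) * exp (2 * L * x)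
           + (w1 x - w2 x)\<^sup>2 * (exp (2 * L * x) * (2 * L))"])
    show "0 \<le> t" by fact
    fix x assume x: "0 \<le> x" "x \<le> t"
    note d1 = odesol_D[OF sol1 order.refl x] and d2 = odesol_D[OF sol2 order.refl x]
    show "((\<lambda>s. (w1 s - w2 s)\<^sup>2 * exp (2 * L * s)) has_real_derivative
        2 * (w1 x - w2 x) * (- P (w1 x) + P (w2 x)) * exp (2 * L * x)
           + (w1 x - w2 x)\<^sup>2 * (exp (2 * L * x) * (2 * L))) (at x within {0..t})"
    proof -
      have dd: "((\<lambda>s. w1 s - w2 s) has_real_derivative (- P (w1 x) - - P (w2 x))) (at x within {0..t})"
        by (rule DERIV_diff[OF d1 d2])
      have sq: "((\<lambda>s. (w1 s - w2 s)\<^sup>2) has_real_derivative (of_nat 2 * ((- P (w1 x) - - P (w2 x)) * (w1 x - w2 x) ^ (2 - Suc 0)))) (at x within {0..t})"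
        by (rule DERIV_power[OF dd])
      have ex: "((\<lambda>s. exp (2 * L * s)) has_real_derivative exp (2 * L * x) * (2 * L)) (at x within {0..t})"
        by (auto intro!: derivative_eq_intros)
      show ?thesis
        by (rule DERIV_cong[OF DERIV_mult[OF sq ex]]) (simp add: algebra_simps)
    qed
    have "2 * (w1 x - w2 x) * (P (w1 x) - P (w2 x)) \<le> 2 * L * (w1 x - w2 x)\<^sup>2"
    proof -
      have "2 * ((w1 x - w2 x) * (P (w1 x) - P (w2 x))) \<le> 2 * (L * (w1 x - w2 x)\<^sup>2)" using key2[OF x] by linarith
      thus ?thesis by (simp only: mult.assoc)
    qed
    hence "2 * (w1 x - w2 x) * (P (w1 x) - P (w2 x)) * exp (2 * L * x)
        \<le> 2 * L * (w1 x - w2 x)\<^sup>2 * exp (2 * L * x)"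
      by (rule mult_right_mono) simp
    then show "0 \<le> 2 * (w1 x - w2 x) * (- P (w1 x) + P (w2 x)) * exp (2 * L * x)
           + (w1 x - w2 x)\<^sup>2 * (exp (2 * L * x) * (2 * L))"
      by (simp add: algebra_simps)
  qed
  then show "(w1 0 - w2 0)\<^sup>2 \<le> exp (2 * L * t) * (w1 t - w2 t)\<^sup>2"
    by (simp only: mult.commute) simp
qed

definition fpsi :: "real \<Rightarrow> real \<Rightarrow> real" where
  "fpsi q u = exp (- q * u) - 1 + q * u"

lemma exp_facts:
  fixes z :: real
  shows "1 - z \<le> exp (- z)" "z \<ge> 0 \<Longrightarrow> exp (- z) \<le> 1"
  using exp_ge_add_one_self[of "- z"] by auto

lemma fpsi_nonneg: "0 \<le> fpsi q u"
  unfolding fpsi_def using exp_ge_add_one_self[of "- q * u"] by simp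

lemma fpsi_le1: "q \<ge> 0 \<Longrightarrow> u \<ge> 0 \<Longrightarrow> fpsi q u \<le> q * u"
  unfolding fpsi_def using exp_facts(2)[of "q * u"] by simp

lemma fpsi_le2: assumes "0 \<le> q * u" shows "fpsi q u \<le> (q * u)\<^sup>2"
proof -
  define z where "z = q * u"
  have z: "z \<ge> 0" using assms by (simp add: z_def)
  have "exp (- z) * (1 + z) \<le> exp (- z) * exp z"
    by (intro mult_left_mono exp_ge_add_one_self) simp
  hence a: "exp (- z) * (1 + z) \<le> 1" by (simp flip: exp_add)
  have b: "1 - exp (- z) \<le> z" using exp_facts(1)[of z] by simp
  have c: "exp (- z) - 1 + z \<le> z * (1 - exp (- z))" using a by (simp add: algebra_simps)
  have "z * (1 - exp (- z)) \<le> z * z" using b z by (simp add: mult_left_mono)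
  then have "exp (- z) - 1 + z \<le> z\<^sup>2" using c by (simp add: power2_eq_square)
  then show ?thesis unfolding fpsi_def z_def by simp
qed

lemma fpsi_bound:
  assumes "q \<ge> 0" "u > 0"
  shows "fpsi q u \<le> max q (q\<^sup>2) * min u (u\<^sup>2)"
proof (cases "u \<le> 1")
  case True
  then have m: "min u (u\<^sup>2) = u\<^sup>2" using assms by (simp add: power2_eq_square min_def mult_left_le)
  have "fpsi q u \<le> q\<^sup>2 * u\<^sup>2" using fpsi_le2[of q u] assms by (simp add: power_mult_distrib)
  also have "\<dots> \<le> max q (q\<^sup>2) * u\<^sup>2" by (intro mult_right_mono) auto
  finally show ?thesis using m by simp
next
  case False
  then have m: "min u (u\<^sup>2) = u" using assms by (simp add: power2_eq_square min_def)
  have "fpsi q u \<le> q * u" using fpsi_le1[of q u] assms by simp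
  also have "\<dots> \<le> max q (q\<^sup>2) * u" using assms by (intro mult_right_mono) auto
  finally show ?thesis using m by simp
qed

lemma fpsi_lip:
  assumes "0 \<le> y" "y \<le> x" "x \<le> M" "u > 0"
  shows "0 \<le> fpsi x u - fpsi y u" "fpsi x u - fpsi y u \<le> max 1 M * min u (u\<^sup>2) * (x - y)"
proof -
  define d where "d = x - y"
  have d: "d \<ge> 0" using assms by (simp add: d_def)
  have ey: "exp (- y * u) = exp (- x * u) * exp (d * u)" by (simp add: d_def flip: exp_add) (simp add: algebra_simps)
  have diff: "fpsi x u - fpsi y u = d * u - (exp (- y * u) - exp (- x * u))"
    unfolding fpsi_def d_def by (simp add: algebra_simps)
  have e1: "exp (- y * u) - exp (- x * u) \<le> d * u"
  proof -
    have "- x * u = - y * u + - (d * u)" by (simp add: d_def algebra_simps)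
    hence ex: "exp (- x * u) = exp (- y * u) * exp (- (d * u))" by (simp only: exp_add)
    have "exp (- y * u) - exp (- x * u) = exp (- y * u) * (1 - exp (- (d * u)))" unfolding ex by (simp add: right_diff_distrib)
    also have "\<dots> \<le> 1 * (d * u)"
      using exp_facts(1)[of "d * u"] exp_facts(2)[of "y * u"] assms d
      by (intro mult_mono) (auto simp: mult_nonneg_nonneg)
    finally show ?thesis by simp
  qed
  show "0 \<le> fpsi x u - fpsi y u" using diff e1 by simp
  have e2: "exp (- x * u) * (d * u) \<le> exp (- y * u) - exp (- x * u)"
  proof -
    have "exp (- x * u) * (1 + d * u) \<le> exp (- x * u) * exp (d * u)"
      by (intro mult_left_mono exp_ge_add_one_self) simp
    then show ?thesis using ey by (simp add: algebra_simps)
  qed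
  have "fpsi x u - fpsi y u \<le> d * u * (1 - exp (- x * u))" using diff e2 by (simp add: algebra_simps)
  also have "\<dots> \<le> d * (max 1 M * min u (u\<^sup>2))"
  proof -
    have "1 - exp (- x * u) \<le> 1" by simp
    have g1: "u * (1 - exp (- x * u)) \<le> u" using assms by (simp add: mult_left_le)
    have g2: "u * (1 - exp (- x * u)) \<le> M * u\<^sup>2"
    proof -
      have "1 - exp (- x * u) \<le> x * u" using exp_facts(1)[of "x * u"] by simp
      also have "\<dots> \<le> M * u" using assms by (intro mult_right_mono) auto
      finally have "u * (1 - exp (- x * u)) \<le> u * (M * u)" using assms by (intro mult_left_mono) auto
      then show ?thesis by (simp add: power2_eq_square mult.assoc mult.left_commute)
    qed
    have "u * (1 - exp (- x * u)) \<le> max 1 M * min u (u\<^sup>2)"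
    proof (cases "u \<le> u\<^sup>2")
      case True
      then show ?thesis using g1 assms
        by (smt (verit, best) max.cobounded1 min_def mult_le_cancel_right1)
    next
      case False
      have "M * u\<^sup>2 \<le> max 1 M * u\<^sup>2" by (intro mult_right_mono) auto
      then show ?thesis using g2 False by (simp add: min_def)
    qed
    then show ?thesis using d by (simp add: mult_left_mono mult.assoc)
  qed
  finally show "fpsi x u - fpsi y u \<le> max 1 M * min u (u\<^sup>2) * (x - y)"
    by (simp add: d_def algebra_simps)
qed

lemma fpsi_convex:
  assumes "0 \<le> \<theta>" "\<theta> \<le> 1"
  shows "fpsi (\<theta> * x) u \<le> \<theta> * fpsi x u"
proof -
  have "exp ((1 - \<theta>) *\<^sub>R 0 + \<theta> *\<^sub>R (- x * u)) \<le> (1 - \<theta>) * exp 0 + \<theta> * exp (- x * u)"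
    by (rule convex_onD[OF exp_convex]) (use assms in auto)
  then show ?thesis unfolding fpsi_def by (simp add: algebra_simps)
qed

context
  fixes \<pi> :: "real measure"
  assumes sets_pi: "sets \<pi> = sets borel"
    and pi_support: "emeasure \<pi> {..0} = 0"
    and pi_moment: "(\<integral>\<^sup>+ z. ennreal (min z (z\<^sup>2)) \<partial>\<pi>) < \<infinity>"
begin

lemma meas_pi: fixes g :: "real \<Rightarrow> real" assumes "g \<in> borel_measurable borel" shows "g \<in> borel_measurable \<pi>"
proof -
  have "borel_measurable \<pi> = (borel_measurable borel :: (real \<Rightarrow> real) set)"
    by (rule measurable_cong_sets[OF sets_pi refl])
  then show ?thesis using assms by simp
qed

lemma AE_pos: "AE u in \<pi>. u > 0"
proof (rule AE_I'[of "{..0}"])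
  show "{..0} \<in> null_sets \<pi>" using pi_support sets_pi by (auto simp: null_sets_def)
  show "{x \<in> space \<pi>. \<not> 0 < x} \<subseteq> {..0}" by auto
qed

lemma m_meas: "(\<lambda>u::real. min u (u\<^sup>2)) \<in> borel_measurable \<pi>"
  by (rule meas_pi) measurable

lemma m_int: "integrable \<pi> (\<lambda>u. min u (u\<^sup>2))"
proof (rule integrableI_bounded[OF m_meas])
  have "(\<integral>\<^sup>+ u. ennreal (norm (min u (u\<^sup>2))) \<partial>\<pi>) = (\<integral>\<^sup>+ u. ennreal (min u (u\<^sup>2)) \<partial>\<pi>)"
  proof (rule nn_integral_cong_AE)
    show "AE u in \<pi>. ennreal (norm (min u (u\<^sup>2))) = ennreal (min u (u\<^sup>2))"
      using AE_pos by eventually_elim (auto simp: min_def)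
  qed
  then show "(\<integral>\<^sup>+ u. ennreal (norm (min u (u\<^sup>2))) \<partial>\<pi>) < \<infinity>" using pi_moment by simp
qed

lemma fpsi_meas: "fpsi q \<in> borel_measurable \<pi>"
  by (rule meas_pi) (unfold fpsi_def, measurable)

lemma fpsi_int: assumes "q \<ge> 0" shows "integrable \<pi> (fpsi q)"
proof (rule Bochner_Integration.integrable_bound[OF _ fpsi_meas])
  show "integrable \<pi> (\<lambda>u. max q (q\<^sup>2) * min u (u\<^sup>2))"
    by (rule integrable_mult_right) (rule m_int)
  show "AE u in \<pi>. norm (fpsi q u) \<le> norm (max q (q\<^sup>2) * min u (u\<^sup>2))"
    using AE_pos
  proof eventually_elim
    case (elim u)
    have "0 \<le> fpsi q u" by (rule fpsi_nonneg)
    moreover have "fpsi q u \<le> max q (q\<^sup>2) * min u (u\<^sup>2)" by (rule fpsi_bound[OF assms elim])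
    ultimately show ?case by simp
  qed
qed

lemma Psi_eq: "Psi b \<sigma> \<pi> q = b * q + 1/2 * \<sigma>\<^sup>2 * q\<^sup>2 + integral\<^sup>L \<pi> (fpsi q)"
  by (simp add: Psi_def fpsi_def[abs_def])

lemma Psi_lb: "b * q \<le> Psi b \<sigma> \<pi> q"
proof -
  have "0 \<le> integral\<^sup>L \<pi> (fpsi q)" by (rule integral_nonneg_AE) (simp add: fpsi_nonneg)
  moreover have "0 \<le> 1/2 * \<sigma>\<^sup>2 * q\<^sup>2" by simp
  ultimately show ?thesis unfolding Psi_eq by linarith
qed

lemma Psi_lip_aux:
  assumes "0 \<le> y" "y \<le> x" "x \<le> M"
  shows "\<bar>Psi b \<sigma> \<pi> x - Psi b \<sigma> \<pi> y\<bar> \<le> (\<bar>b\<bar> + \<sigma>\<^sup>2 * M + max 1 M * integral\<^sup>L \<pi> (\<lambda>u. min u (u\<^sup>2))) * (x - y)"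
proof -
  define I where "I = integral\<^sup>L \<pi> (\<lambda>u. fpsi x u - fpsi y u)"
  have x0: "x \<ge> 0" using assms by simp
  have eq: "Psi b \<sigma> \<pi> x - Psi b \<sigma> \<pi> y = b * (x - y) + 1/2 * \<sigma>\<^sup>2 * (x\<^sup>2 - y\<^sup>2) + I"
    unfolding Psi_eq I_def
    using Bochner_Integration.integral_diff[OF fpsi_int[OF x0] fpsi_int[OF assms(1)]]
    by (simp add: algebra_simps)
  have I0: "0 \<le> I" unfolding I_def
    by (rule integral_nonneg_AE) (use AE_pos in \<open>eventually_elim, use fpsi_lip[OF assms] in auto\<close>)
  have I1: "I \<le> (max 1 M * (x - y)) * integral\<^sup>L \<pi> (\<lambda>u. min u (u\<^sup>2))"
  proof -
    have "I \<le> integral\<^sup>L \<pi> (\<lambda>u. (max 1 M * (x - y)) * min u (u\<^sup>2))"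
      unfolding I_def
    proof (rule integral_mono_AE')
      show "integrable \<pi> (\<lambda>u. (max 1 M * (x - y)) * min u (u\<^sup>2))"
        by (rule integrable_mult_right) (rule m_int)
      show "AE u in \<pi>. fpsi x u - fpsi y u \<le> max 1 M * (x - y) * min u (u\<^sup>2)"
        using AE_pos by eventually_elim (use fpsi_lip[OF assms] in \<open>auto simp: algebra_simps\<close>)
      show "AE u in \<pi>. 0 \<le> max 1 M * (x - y) * min u (u\<^sup>2)"
        using AE_pos by eventually_elim (use assms in \<open>auto simp: min_def\<close>)
    qed
    then show ?thesis by simp
  qed
  have s0: "0 \<le> 1/2 * \<sigma>\<^sup>2 * (x\<^sup>2 - y\<^sup>2)"
    using assms by (simp add: power_mono)
  have s1: "1/2 * \<sigma>\<^sup>2 * (x\<^sup>2 - y\<^sup>2) \<le> \<sigma>\<^sup>2 * M * (x - y)"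
  proof -
    have "x\<^sup>2 - y\<^sup>2 = (x + y) * (x - y)" by (simp add: power2_eq_square algebra_simps)
    also have "\<dots> \<le> (2 * M) * (x - y)" using assms by (intro mult_right_mono) auto
    finally have "x\<^sup>2 - y\<^sup>2 \<le> 2 * M * (x - y)" .
    then have "\<sigma>\<^sup>2 * (x\<^sup>2 - y\<^sup>2) \<le> \<sigma>\<^sup>2 * (2 * M * (x - y))" by (intro mult_left_mono) auto
    then show ?thesis by (simp add: algebra_simps)
  qed
  have "\<bar>b * (x - y)\<bar> = \<bar>b\<bar> * (x - y)" using assms by (simp add: abs_mult)
  then show ?thesis unfolding eq using I0 I1 s0 s1
    by (simp add: algebra_simps) linarith
qed

lemma Psi_lip:
  assumes "0 \<le> x" "x \<le> M" "0 \<le> y" "y \<le> M"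
  shows "\<bar>Psi b \<sigma> \<pi> x - Psi b \<sigma> \<pi> y\<bar> \<le> (\<bar>b\<bar> + \<sigma>\<^sup>2 * M + max 1 M * integral\<^sup>L \<pi> (\<lambda>u. min u (u\<^sup>2))) * \<bar>x - y\<bar>"
proof (cases "y \<le> x")
  case True
  then show ?thesis using Psi_lip_aux[of y x M] assms by simp
next
  case False
  then show ?thesis using Psi_lip_aux[of x y M] assms by (simp add: abs_minus_commute)
qed

lemma Psi_convex:
  assumes "0 \<le> \<theta>" "\<theta> \<le> 1" "0 \<le> x"
  shows "Psi b \<sigma> \<pi> (\<theta> * x) \<le> \<theta> * Psi b \<sigma> \<pi> x"
proof -
  have tx: "0 \<le> \<theta> * x" using assms by simp
  have "integral\<^sup>L \<pi> (fpsi (\<theta> * x)) \<le> integral\<^sup>L \<pi> (\<lambda>u. \<theta> * fpsi x u)"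
    by (rule integral_mono[OF fpsi_int[OF tx]]) (use fpsi_int[OF assms(3)] fpsi_convex[OF assms(1,2)] in auto)
  hence i: "integral\<^sup>L \<pi> (fpsi (\<theta> * x)) \<le> \<theta> * integral\<^sup>L \<pi> (fpsi x)" by simp
  have "\<theta>\<^sup>2 \<le> \<theta>" using assms by (simp add: power2_eq_square mult_left_le)
  hence "\<sigma>\<^sup>2 * x\<^sup>2 * \<theta>\<^sup>2 \<le> \<sigma>\<^sup>2 * x\<^sup>2 * \<theta>" by (intro mult_left_mono) auto
  hence s: "1/2 * \<sigma>\<^sup>2 * (\<theta> * x)\<^sup>2 \<le> \<theta> * (1/2 * \<sigma>\<^sup>2 * x\<^sup>2)" by (simp add: power_mult_distrib algebra_simps)
  show ?thesis unfolding Psi_eq using i s by (simp add: algebra_simps)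
qed

lemma Psi_limit:
  assumes l0: "l0 > 0"
  shows "(\<lambda>n. Psi b \<sigma> \<pi> (l0 / real (Suc n)) / (l0 / real (Suc n))) \<longlonglongrightarrow> b"
proof -
  define \<delta> where "\<delta> n = l0 / real (Suc n)" for n
  have dpos: "\<delta> n > 0" for n using l0 by (simp add: \<delta>_def)
  have dle: "\<delta> n \<le> l0" for n using l0 by (simp add: \<delta>_def divide_le_eq)
  have dlim: "\<delta> \<longlonglongrightarrow> 0"
  proof -
    have "(\<lambda>n. l0 * inverse (real (Suc n))) \<longlonglongrightarrow> l0 * 0"
      by (intro tendsto_mult tendsto_const LIMSEQ_inverse_real_of_nat)
    moreover have "\<delta> = (\<lambda>n. l0 * inverse (real (Suc n)))" by (simp add: \<delta>_def[abs_def] divide_inverse)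
    ultimately show ?thesis by simp
  qed
  define s where "s n u = fpsi (\<delta> n) u / \<delta> n" for n u
  have intlim: "(\<lambda>n. integral\<^sup>L \<pi> (s n)) \<longlonglongrightarrow> integral\<^sup>L \<pi> (\<lambda>u. 0)"
  proof (rule integral_dominated_convergence[where w = "\<lambda>u. max 1 l0 * min u (u\<^sup>2)"])
    show "(\<lambda>u. 0::real) \<in> borel_measurable \<pi>" by simp
    show "s n \<in> borel_measurable \<pi>" for n unfolding s_def
      using fpsi_meas by (intro borel_measurable_divide) auto
    show "integrable \<pi> (\<lambda>u. max 1 l0 * min u (u\<^sup>2))"
      by (rule integrable_mult_right) (rule m_int)
    show "AE u in \<pi>. (\<lambda>n. s n u) \<longlonglongrightarrow> 0"
      using AE_pos
    proof eventually_elim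
      case (elim u)
      show ?case
      proof (rule tendsto_sandwich[of "\<lambda>n. 0" _ _ "\<lambda>n. \<delta> n * u\<^sup>2"])
        show "\<forall>\<^sub>F n in sequentially. 0 \<le> s n u"
          by (rule always_eventually) (use dpos fpsi_nonneg in \<open>simp add: s_def less_imp_le\<close>)
        show "\<forall>\<^sub>F n in sequentially. s n u \<le> \<delta> n * u\<^sup>2"
        proof (rule always_eventually, rule allI)
          fix n
          have "fpsi (\<delta> n) u \<le> (\<delta> n * u)\<^sup>2" using dpos[of n] elim by (intro fpsi_le2) simp
          then show "s n u \<le> \<delta> n * u\<^sup>2" using dpos[of n]
            by (simp add: s_def divide_le_eq power2_eq_square algebra_simps)
        qed
        show "(\<lambda>n. 0::real) \<longlonglongrightarrow> 0" by simp
        show "(\<lambda>n. \<delta> n * u\<^sup>2) \<longlonglongrightarrow> 0" using tendsto_mult[OF dlim tendsto_const[of "u\<^sup>2"]] by simp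
      qed
    qed
    show "AE u in \<pi>. norm (s n u) \<le> max 1 l0 * min u (u\<^sup>2)" for n
      using AE_pos
    proof eventually_elim
      case (elim u)
      have s0: "0 \<le> s n u" using dpos[of n] fpsi_nonneg by (simp add: s_def)
      have a: "s n u \<le> u"
      proof -
        have "fpsi (\<delta> n) u \<le> \<delta> n * u" using dpos[of n] elim by (intro fpsi_le1) auto
        then show ?thesis using dpos[of n] by (simp add: s_def divide_le_eq algebra_simps)
      qed
      have b: "s n u \<le> l0 * u\<^sup>2"
      proof -
        have "fpsi (\<delta> n) u \<le> (\<delta> n * u)\<^sup>2" using dpos[of n] elim by (intro fpsi_le2) simp
        then have "s n u \<le> \<delta> n * u\<^sup>2" using dpos[of n]
          by (simp add: s_def divide_le_eq power2_eq_square algebra_simps)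
        also have "\<dots> \<le> l0 * u\<^sup>2" using dle[of n] by (intro mult_right_mono) auto
        finally show ?thesis .
      qed
      have "s n u \<le> max 1 l0 * min u (u\<^sup>2)"
      proof (cases "u \<le> u\<^sup>2")
        case True
        have "u \<le> max 1 l0 * u" using elim by (simp add: mult_le_cancel_right1)
        then show ?thesis using a True by (simp add: min_def)
      next
        case False
        have "l0 * u\<^sup>2 \<le> max 1 l0 * u\<^sup>2" by (intro mult_right_mono) auto
        then show ?thesis using b False by (simp add: min_def)
      qed
      then show ?case using s0 by simp
    qed
  qed
  have eqn: "Psi b \<sigma> \<pi> (\<delta> n) / \<delta> n = b + 1/2 * \<sigma>\<^sup>2 * \<delta> n + integral\<^sup>L \<pi> (s n)" for n
  proof -
    have "integral\<^sup>L \<pi> (s n) = integral\<^sup>L \<pi> (fpsi (\<delta> n)) / \<delta> n" unfolding s_def by simp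
    then show ?thesis unfolding Psi_eq using dpos[of n]
      by (simp add: add_divide_distrib power2_eq_square)
  qed
  have "(\<lambda>n. b + 1/2 * \<sigma>\<^sup>2 * \<delta> n + integral\<^sup>L \<pi> (s n)) \<longlonglongrightarrow> b + 1/2 * \<sigma>\<^sup>2 * 0 + 0"
    using intlim by (intro tendsto_add tendsto_mult tendsto_const dlim) auto
  then show ?thesis using eqn by (simp add: \<delta>_def)
qed

end

lemma rt_facts:
  fixes \<sigma> b lam0 :: real and \<pi> :: "real measure" and v :: "real \<Rightarrow> real \<Rightarrow> real"
  assumes sets_pi: "sets \<pi> = sets borel"
    and pi_support: "emeasure \<pi> {..0} = 0"
    and pi_moment: "(\<integral>\<^sup>+ z. ennreal (min z (z\<^sup>2)) \<partial>\<pi>) < \<infinity>"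
    and sol: "\<And>l. l \<ge> 0 \<Longrightarrow> odesol (Psi b \<sigma> \<pi>) (\<lambda>s. v s l)"
    and v_init: "\<And>l. l \<ge> 0 \<Longrightarrow> v 0 l = l"
    and lam0: "lam0 > 0" "lam0 < \<mu>"
    and neg: "\<And>z. 0 < z \<Longrightarrow> z \<le> \<mu> \<Longrightarrow> Psi b \<sigma> \<pi> z < 0"
    and b_neg: "b < 0"
    and t: "t \<ge> 0"
  shows "lam0 * exp (b * t) \<le> v_inv v t lam0 \<and> v_inv v t lam0 \<le> lam0 \<and> v t (v_inv v t lam0) = lam0"
proof -
  let ?P = "Psi b \<sigma> \<pi>"
  have lb: "\<And>z. 0 < z \<Longrightarrow> b * z \<le> ?P z" using Psi_lb[OF sets_pi pi_support pi_moment] by blast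
  define a where "a = lam0 * exp (b * t)"
  define M where "M = lam0 * exp (- b * t)"
  have a0: "a > 0" using lam0 by (simp add: a_def)
  have aa: "exp (b * t) \<le> 1" using b_neg t by (simp add: mult_nonpos_nonneg)
  have al: "a \<le> lam0" using lam0 aa by (simp add: a_def mult_left_le)
  have M0: "M \<ge> 0" using lam0 by (simp add: M_def)
  define L where "L = \<bar>b\<bar> + \<sigma>\<^sup>2 * M + max 1 M * integral\<^sup>L \<pi> (\<lambda>u. min u (u\<^sup>2))"
  have L0: "L \<ge> 0"
  proof -
    have "0 \<le> integral\<^sup>L \<pi> (\<lambda>u. min u (u\<^sup>2))"
      by (rule integral_nonneg_AE) (use AE_pos[OF sets_pi pi_support pi_moment] in \<open>eventually_elim, auto simp: min_def\<close>)
    then show ?thesis using M0 unfolding L_def by (intro add_nonneg_nonneg mult_nonneg_nonneg) auto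
  qed
  have B1: "a \<le> l \<and> l \<le> lam0" if l: "l \<ge> 0" "v t l = lam0" for l
  proof
    have pos: "v s l > 0" if "0 \<le> s" "s \<le> t" for s
      using pos_back[OF sol[OF l(1)] lb _ that] b_neg l lam0 by auto
    have "ln (v t l) - ln (v 0 l) \<le> - b * (t - 0)"
      by (rule ln_upper[OF sol[OF l(1)] lb]) (use t pos in auto)
    hence "ln lam0 + b * t \<le> ln l" using l v_init by simp
    hence "exp (ln lam0 + b * t) \<le> exp (ln l)" by simp
    moreover have "l > 0" using pos[of 0] t v_init l by simp
    ultimately show "a \<le> l" using lam0 by (simp add: a_def exp_add)
    show "l \<le> lam0"
    proof (rule ccontr)
      assume "\<not> l \<le> lam0"
      define c where "c = min l \<mu>"
      have c: "lam0 < c" "c \<le> \<mu>" using \<open>\<not> l \<le> lam0\<close> lam0 by (auto simp: c_def)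
      have "c \<le> v t l"
        by (rule stay_above[OF sol[OF l(1)] order.refl t]) (use c lam0 v_init l neg in \<open>auto simp: c_def\<close>)
      thus False using c l by simp
    qed
  qed
  have B2: "l \<le> v s l \<and> v s l \<le> l * exp (- b * t)"
    if l: "0 < l" "l \<le> lam0" and s: "0 \<le> s" "s \<le> t" for l s
  proof -
    have lo: "l \<le> v s' l" if "0 \<le> s'" for s'
      by (rule stay_above[OF sol] ) (use l that v_init neg lam0 in auto)
    have "ln (v s l) - ln (v 0 l) \<le> - b * (s - 0)"
      by (rule ln_upper[OF sol lb]) (use l s lo in \<open>auto intro: less_le_trans\<close>)
    also have "\<dots> \<le> - b * t" using b_neg s by (intro mult_left_mono) auto
    finally have "ln (v s l) \<le> ln l + - b * t" using v_init l by simp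
    hence "exp (ln (v s l)) \<le> exp (ln l + - b * t)" by simp
    moreover have "v s l > 0" using lo[of s] l s by simp
    moreover have "exp (ln l + - b * t) = l * exp (- b * t)" by (simp only: exp_add exp_ln[OF l(1)])
    ultimately have "v s l \<le> l * exp (- b * t)" by simp
    then show ?thesis using lo[of s] s by simp
  qed
  have B2': "0 \<le> v s l \<and> v s l \<le> M" if l: "a / 2 \<le> l" "l \<le> lam0" and s: "0 \<le> s" "s \<le> t" for l s
  proof -
    have lp: "0 < l" using a0 l by simp
    have "v s l \<le> l * exp (- b * t)" using B2[OF lp l(2) s] by simp
    also have "\<dots> \<le> M" unfolding M_def using l by (intro mult_right_mono) auto
    finally show ?thesis using B2[OF lp l(2) s] lp by simp
  qed
  have B3: "(v t l1 - v t l2)\<^sup>2 \<le> exp (2 * L * t) * (l1 - l2)\<^sup>2 \<and> (l1 - l2)\<^sup>2 \<le> exp (2 * L * t) * (v t l1 - v t l2)\<^sup>2"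
    if l1: "a / 2 \<le> l1" "l1 \<le> lam0" and l2: "a / 2 \<le> l2" "l2 \<le> lam0" for l1 l2
  proof -
    have p1: "l1 \<ge> 0" "l2 \<ge> 0" using a0 l1 l2 by auto
    have lip: "\<bar>?P (v s l1) - ?P (v s l2)\<bar> \<le> L * \<bar>v s l1 - v s l2\<bar>" if "0 \<le> s" "s \<le> t" for s
      unfolding L_def
      by (rule Psi_lip[OF sets_pi pi_support pi_moment]) (use B2'[OF l1 that] B2'[OF l2 that] in auto)
    note g = gronwall[OF sol[OF p1(1)] sol[OF p1(2)] t L0 lip]
    show ?thesis using g v_init p1 by simp
  qed
  have cont: "continuous_on {a/2..lam0} (\<lambda>l. v t l)"
  proof (rule lipschitz_on_continuous_on[where L = "exp (L * t)"], rule lipschitz_onI)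
    fix l1 l2 assume "l1 \<in> {a/2..lam0}" "l2 \<in> {a/2..lam0}"
    then have "(v t l1 - v t l2)\<^sup>2 \<le> exp (2 * L * t) * (l1 - l2)\<^sup>2" using B3[of l1 l2] by simp
    also have "\<dots> = (exp (L * t) * \<bar>l1 - l2\<bar>)\<^sup>2"
    proof -
      have e: "exp (2 * L * t) = (exp (L * t))\<^sup>2"
        by (simp add: power2_eq_square flip: exp_add)
      show ?thesis unfolding e by (simp add: power_mult_distrib)
    qed
    finally have sq: "(v t l1 - v t l2)\<^sup>2 \<le> (exp (L * t) * \<bar>l1 - l2\<bar>)\<^sup>2" .
    have "\<bar>v t l1 - v t l2\<bar> \<le> exp (L * t) * \<bar>l1 - l2\<bar>"
      by (rule power2_le_imp_le) (use sq in simp_all)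
    then show "dist (v t l1) (v t l2) \<le> exp (L * t) * dist l1 l2" by (simp add: dist_real_def)
  qed simp
  have "v t (a/2) \<le> lam0"
  proof -
    have "v t (a/2) \<le> a / 2 * exp (- b * t)" using B2[of "a/2" t] a0 al t by simp
    also have "\<dots> = lam0 / 2" by (simp add: a_def flip: exp_add)
    finally show ?thesis using lam0 by simp
  qed
  moreover have "lam0 \<le> v t lam0" using B2[of lam0 t] lam0 t by simp
  ultimately obtain ls where ls: "a/2 \<le> ls" "ls \<le> lam0" "v t ls = lam0"
    using IVT'[of "\<lambda>l. v t l" "a/2" lam0 lam0] cont al a0 by force
  have uniq: "l = ls" if "l \<ge> 0" "v t l = lam0" for l
  proof -
    have "a \<le> l" "l \<le> lam0" using B1[OF that] by auto
    then have "a / 2 \<le> l" using a0 by simp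
    then have "(l - ls)\<^sup>2 \<le> exp (2 * L * t) * (v t l - v t ls)\<^sup>2"
      using B3[OF _ _ ls(1,2), of l] \<open>l \<le> lam0\<close> by blast
    then have "(l - ls)\<^sup>2 \<le> 0" using that ls by simp
    then show ?thesis by simp
  qed
  have vi: "v_inv v t lam0 = ls"
    unfolding v_inv_def
  proof (rule the_equality)
    show "0 \<le> ls \<and> v t ls = lam0" using ls a0 by simp
    show "\<And>l. 0 \<le> l \<and> v t l = lam0 \<Longrightarrow> l = ls" using uniq by blast
  qed
  have "0 \<le> ls" using ls a0 by simp
  then have "a \<le> ls" using B1[of ls] ls by blast
  then show ?thesis using ls vi by (simp add: a_def)
qed

lemma upper_bound:
  fixes \<sigma> b lam0 :: real and \<pi> :: "real measure" and v :: "real \<Rightarrow> real \<Rightarrow> real"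
  assumes sets_pi: "sets \<pi> = sets borel"
    and pi_support: "emeasure \<pi> {..0} = 0"
    and pi_moment: "(\<integral>\<^sup>+ z. ennreal (min z (z\<^sup>2)) \<partial>\<pi>) < \<infinity>"
    and sol: "\<And>l. l \<ge> 0 \<Longrightarrow> odesol (Psi b \<sigma> \<pi>) (\<lambda>s. v s l)"
    and v_init: "\<And>l. l \<ge> 0 \<Longrightarrow> v 0 l = l"
    and lam0: "lam0 > 0" "lam0 < \<mu>"
    and neg: "\<And>z. 0 < z \<Longrightarrow> z \<le> \<mu> \<Longrightarrow> Psi b \<sigma> \<pi> z < 0"
    and b_neg: "b < 0"
    and eps: "\<epsilon> > 0"
  shows "\<exists>c K. - b - \<epsilon> \<le> c \<and> (\<forall>t\<ge>0. ln (v_inv v t lam0) \<le> K - c * t)"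
proof -
  let ?P = "Psi b \<sigma> \<pi>"
  have rt: "lam0 * exp (b * t) \<le> v_inv v t lam0 \<and> v_inv v t lam0 \<le> lam0 \<and> v t (v_inv v t lam0) = lam0"
    if "t \<ge> 0" for t
  proof (rule rt_facts[OF sets_pi pi_support pi_moment])
    show "\<And>l. 0 \<le> l \<Longrightarrow> odesol ?P (\<lambda>s. v s l)" by (rule sol)
    show "\<And>l. 0 \<le> l \<Longrightarrow> v 0 l = l" by (rule v_init)
    show "0 < lam0" "lam0 < \<mu>" by (rule lam0(1), rule lam0(2))
    show "\<And>z. 0 < z \<Longrightarrow> z \<le> \<mu> \<Longrightarrow> ?P z < 0" by (rule neg)
    show "b < 0" by (rule b_neg)
    show "0 \<le> t" by (rule that)
  qed
  obtain N where N: "\<And>n. n \<ge> N \<Longrightarrow> norm (?P (lam0 / real (Suc n)) / (lam0 / real (Suc n)) - b) < \<epsilon>"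
    using LIMSEQ_D[OF Psi_limit[OF sets_pi pi_support pi_moment lam0(1), of b \<sigma>] eps] by blast
  define \<delta> where "\<delta> = lam0 / real (Suc N)"
  have d0: "\<delta> > 0" using lam0 by (simp add: \<delta>_def)
  have dl: "\<delta> \<le> lam0" using lam0 by (simp add: \<delta>_def divide_le_eq)
  define c where "c = - ?P \<delta> / \<delta>"
  have cge: "- b - \<epsilon> \<le> c" using N[of N] by (simp add: c_def \<delta>_def abs_less_iff)
  have c0: "c > 0" using neg[of \<delta>] d0 dl lam0 by (simp add: c_def divide_neg_pos)
  have ratio: "?P y / y \<le> ?P x / x" if "0 < y" "y \<le> x" for x y
  proof -
    have x0: "x > 0" using that by simp
    have "?P ((y / x) * x) \<le> (y / x) * ?P x"
      by (rule Psi_convex[OF sets_pi pi_support pi_moment]) (use that x0 in auto)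
    then have "?P y \<le> y * (?P x / x)" using x0 by simp
    then show ?thesis using that by (simp add: divide_le_eq mult.commute)
  qed
  define c1 where "c1 = - ?P lam0 / lam0"
  have c1p: "c1 > 0" using neg[of lam0] lam0 by (simp add: c1_def divide_neg_pos)
  have slope1: "c1 * y \<le> - ?P y" if "0 < y" "y \<le> lam0" for y
  proof -
    have "?P y / y \<le> - c1" using ratio[OF that] by (simp add: c1_def)
    then show ?thesis using that by (simp add: divide_le_eq)
  qed
  have slope2: "c \<le> - ?P y / y" if "0 < y" "y \<le> \<delta>" for y
    using ratio[OF that] by (simp add: c_def)
  define T1 where "T1 = lam0 / (c1 * \<delta>)"
  have cdp: "c1 * \<delta> > 0" using c1p d0 by simp
  show ?thesis
  proof (intro exI conjI allI impI)
    show "- b - \<epsilon> \<le> c" by (rule cge)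
    fix t :: real assume t: "t \<ge> 0"
    define r where "r = v_inv v t lam0"
    have rf: "lam0 * exp (b * t) \<le> r" "r \<le> lam0" "v t r = lam0" using rt[OF t] by (auto simp: r_def)
    have r0: "r > 0" using rf(1) lam0 by (smt (verit) exp_gt_zero mult_pos_pos)
    define w where "w s = v s r" for s
    have solw: "odesol ?P w" unfolding w_def[abs_def] using sol r0 by simp
    have w0: "w 0 = r" using v_init r0 by (simp add: w_def)
    have wt: "w t = lam0" using rf by (simp add: w_def)
    have wlo: "r \<le> w s" if "0 \<le> s" for s
      by (rule stay_above[OF solw order.refl that r0]) (use w0 neg rf lam0 in auto)
    have wup: "w s \<le> lam0" if "0 \<le> s" "s \<le> t" for s
    proof (rule ccontr)
      assume A: "\<not> w s \<le> lam0"
      define c' where "c' = min (w s) \<mu>"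
      have c': "lam0 < c'" "c' \<le> \<mu>" "c' \<le> w s" using A lam0 by (auto simp: c'_def)
      have "c' \<le> w t"
        by (rule stay_above[OF solw that]) (use c' lam0 neg in auto)
      then show False using wt c' by simp
    qed
    have lin: "c1 * \<delta> * (t2 - t1) \<le> w t2 - w t1"
      if "0 \<le> t1" "t1 \<le> t2" "t2 \<le> t" "\<And>s. t1 \<le> s \<Longrightarrow> s \<le> t2 \<Longrightarrow> \<delta> \<le> w s" for t1 t2
    proof (rule lin_ge[OF solw that(1,2)])
      fix s assume s: "t1 \<le> s" "s \<le> t2"
      have ws: "\<delta> \<le> w s" "w s \<le> lam0" using that(4)[OF s] wup[of s] s that by auto
      have "c1 * \<delta> \<le> c1 * w s" using ws c1p by simp
      also have "\<dots> \<le> - ?P (w s)" using slope1[of "w s"] ws d0 by simp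
      finally show "c1 * \<delta> \<le> - ?P (w s)" .
    qed
    have KT: "ln lam0 \<le> ln lam0 + c * T1 - c * t" if "t \<le> T1"
      using that c0 by (simp add: mult_left_mono)
    show "ln r \<le> ln lam0 + c * T1 - c * t"
    proof (cases "\<delta> \<le> r")
      case True
      have "c1 * \<delta> * (t - 0) \<le> w t - w 0"
        by (rule lin) (use t wlo True in \<open>auto intro: order_trans\<close>)
      hence "c1 * \<delta> * t \<le> lam0" using w0 wt r0 by simp
      hence "t \<le> T1" using cdp by (simp add: T1_def pos_le_divide_eq mult.commute)
      moreover have "ln r \<le> ln lam0" using rf r0 by simp
      ultimately show ?thesis using KT by linarith
    next
      case False
      have cont: "continuous_on {0..t} w"
        using odesol_cont[OF solw] by (rule continuous_on_subset) auto
      obtain \<tau> where tau: "0 \<le> \<tau>" "\<tau> \<le> t" "w \<tau> = \<delta>"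
        using IVT'[of w 0 \<delta> t] cont False w0 wt dl t by auto
      have wle: "w s \<le> \<delta>" if "0 \<le> s" "s \<le> \<tau>" for s
      proof (rule ccontr)
        assume A: "\<not> w s \<le> \<delta>"
        define c' where "c' = min (w s) \<mu>"
        have c': "\<delta> < c'" "c' \<le> \<mu>" "c' \<le> w s" using A dl lam0 by (auto simp: c'_def)
        have "c' \<le> w \<tau>"
          by (rule stay_above[OF solw that]) (use c' d0 neg in auto)
        then show False using tau c' by simp
      qed
      have "c * (\<tau> - 0) \<le> ln (w \<tau>) - ln (w 0)"
      proof (rule ln_ge[OF solw order.refl tau(1)])
        fix s assume s: "0 \<le> s" "s \<le> \<tau>"
        show "w s > 0" using wlo[of s] r0 s by simp
        show "c \<le> - ?P (w s) / w s" using slope2[of "w s"] wle[OF s] wlo[of s] r0 s by simp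
      qed
      hence A: "ln r \<le> ln \<delta> - c * \<tau>" using w0 tau by simp
      have "c1 * \<delta> * (t - \<tau>) \<le> w t - w \<tau>"
      proof (rule lin[OF tau(1,2) order.refl])
        fix s assume s: "\<tau> \<le> s" "s \<le> t"
        show "\<delta> \<le> w s" by (rule stay_above[OF solw tau(1) s(1) d0]) (use tau neg dl lam0 in auto)
      qed
      hence "c1 * \<delta> * (t - \<tau>) \<le> lam0" using wt tau d0 by simp
      hence "t - \<tau> \<le> T1" using cdp by (simp add: T1_def pos_le_divide_eq mult.commute)
      hence "c * (t - T1) \<le> c * \<tau>" using c0 by (intro mult_left_mono) auto
      moreover have "ln \<delta> \<le> ln lam0" using d0 dl by simp
      ultimately show ?thesis using A by (simp add: algebra_simps)
    qed
  qed
qed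

theorem lemma3:
  fixes \<sigma> b lam0 :: real and \<pi> :: "real measure" and v :: "real \<Rightarrow> real \<Rightarrow> real"
  assumes sigma_nonneg: "\<sigma> \<ge> 0"
    and sets_pi: "sets \<pi> = sets borel"
    and sigma_finite: "sigma_finite_measure \<pi>"
    and pi_support: "emeasure \<pi> {..0} = 0"
    and pi_moment: "(\<integral>\<^sup>+ z. ennreal (min z (z\<^sup>2)) \<partial>\<pi>) < \<infinity>"
    and v_ode: "\<And>l t. l \<ge> 0 \<Longrightarrow> t \<ge> 0 \<Longrightarrow>
         ((\<lambda>s. v s l) has_real_derivative (- Psi b \<sigma> \<pi> (v t l))) (at t within {0..})"
    and v_init: "\<And>l. l \<ge> 0 \<Longrightarrow> v 0 l = l"
    and lam0_pos: "lam0 > 0" "ereal lam0 < rho_crit b \<sigma> \<pi>"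
    and b_neg: "b < 0"
  shows "(\<lambda>t. ln (v_inv v t lam0)) \<sim>[at_top] (\<lambda>t. b * t)"
proof -
  let ?P = "Psi b \<sigma> \<pi>"
  obtain \<mu> where mu: "lam0 < \<mu>" "ereal \<mu> < rho_crit b \<sigma> \<pi>"
    using ereal_dense2[OF lam0_pos(2)] by auto
  have neg: "?P z < 0" if z: "0 < z" "z \<le> \<mu>" for z
  proof (rule ccontr)
    assume "\<not> ?P z < 0"
    define S where "S = {z. z > 0 \<and> ?P z \<ge> 0}"
    have zS: "z \<in> S" using z \<open>\<not> ?P z < 0\<close> by (simp add: S_def)
    hence "rho_crit b \<sigma> \<pi> = ereal (Inf S)" unfolding rho_crit_def S_def by auto
    moreover have "Inf S \<le> z"
      by (rule cInf_lower[OF zS]) (rule bdd_belowI[of _ 0], simp add: S_def)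
    ultimately have "rho_crit b \<sigma> \<pi> \<le> ereal \<mu>" using z by simp
    thus False using mu by simp
  qed
  have sol: "odesol ?P (\<lambda>s. v s l)" if "l \<ge> 0" for l
    unfolding odesol_def using v_ode[OF that] by blast
  have rt: "lam0 * exp (b * t) \<le> v_inv v t lam0 \<and> v_inv v t lam0 \<le> lam0 \<and> v t (v_inv v t lam0) = lam0"
    if "t \<ge> 0" for t
  proof (rule rt_facts[OF sets_pi pi_support pi_moment])
    show "\<And>l. 0 \<le> l \<Longrightarrow> odesol ?P (\<lambda>s. v s l)" by (rule sol)
    show "\<And>l. 0 \<le> l \<Longrightarrow> v 0 l = l" by (rule v_init)
    show "0 < lam0" "lam0 < \<mu>" by (rule lam0_pos(1), rule mu(1))
    show "\<And>z. 0 < z \<Longrightarrow> z \<le> \<mu> \<Longrightarrow> ?P z < 0" by (rule neg)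
    show "b < 0" by (rule b_neg)
    show "0 \<le> t" by (rule that)
  qed
  have upper: "\<exists>c K. - b - \<epsilon> \<le> c \<and> (\<forall>t\<ge>0. ln (v_inv v t lam0) \<le> K - c * t)" if "\<epsilon> > 0" for \<epsilon>
  proof (rule upper_bound[OF sets_pi pi_support pi_moment])
    show "\<And>l. 0 \<le> l \<Longrightarrow> odesol ?P (\<lambda>s. v s l)" by (rule sol)
    show "\<And>l. 0 \<le> l \<Longrightarrow> v 0 l = l" by (rule v_init)
    show "0 < lam0" "lam0 < \<mu>" by (rule lam0_pos(1), rule mu(1))
    show "\<And>z. 0 < z \<Longrightarrow> z \<le> \<mu> \<Longrightarrow> ?P z < 0" by (rule neg)
    show "b < 0" by (rule b_neg)
    show "0 < \<epsilon>" by (rule that)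
  qed
  define g where "g t = ln (v_inv v t lam0)" for t
  have lower: "ln lam0 + b * t \<le> g t" if "t \<ge> 0" for t
  proof -
    have "lam0 * exp (b * t) \<le> v_inv v t lam0" using rt[OF that] by simp
    moreover have "0 < lam0 * exp (b * t)" using lam0_pos(1) by simp
    ultimately have "ln (lam0 * exp (b * t)) \<le> ln (v_inv v t lam0)" by (rule ln_mono)
    thus ?thesis using lam0_pos(1) by (simp add: g_def ln_mult)
  qed
  have lim: "((\<lambda>t. g t / (b * t)) \<longlongrightarrow> 1) at_top"
  proof (rule tendstoI)
    fix e :: real assume e: "e > 0"
    define \<epsilon> where "\<epsilon> = - b * e / 2"
    have ep: "\<epsilon> > 0" using e b_neg by (simp add: \<epsilon>_def mult_neg_pos)
    obtain c K where cK: "- b - \<epsilon> \<le> c" "\<And>t. t \<ge> 0 \<Longrightarrow> g t \<le> K - c * t"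
      using upper[OF ep] unfolding g_def by blast
    define T where "T = (2 * \<bar>K\<bar> + \<bar>ln lam0\<bar> + 1) / (- b * e) + 1"
    have "\<forall>t\<ge>T. dist (g t / (b * t)) 1 < e"
    proof (intro allI impI)
      fix t assume tT: "T \<le> t"
      have be: "- b * e > 0" using b_neg e by (simp add: mult_neg_pos)
      have T0: "T > 0" unfolding T_def using be by (intro add_nonneg_pos divide_nonneg_pos) auto
      have t0: "t > 0" using tT T0 by simp
      define \<tau> where "\<tau> = - b * t"
      have tau0: "\<tau> > 0" using t0 b_neg by (simp add: \<tau>_def mult_neg_pos)
      have big: "2 * \<bar>K\<bar> + \<bar>ln lam0\<bar> + 1 < e * \<tau>"
      proof -
        have "(2 * \<bar>K\<bar> + \<bar>ln lam0\<bar> + 1) / (- b * e) < t" using tT unfolding T_def by simp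
        hence "2 * \<bar>K\<bar> + \<bar>ln lam0\<bar> + 1 < t * (- b * e)" using pos_divide_less_eq[OF be] by blast
        thus ?thesis by (simp add: \<tau>_def algebra_simps)
      qed
      have h1: "g t - b * t \<ge> ln lam0" using lower[of t] t0 by simp
      have h2: "g t - b * t \<le> K + e / 2 * \<tau>"
      proof -
        have "(- b - \<epsilon>) * t \<le> c * t" using cK(1) t0 by (intro mult_right_mono) auto
        moreover have "(- b - \<epsilon>) * t = \<tau> - e / 2 * \<tau>" by (simp add: \<epsilon>_def \<tau>_def algebra_simps)
        ultimately show ?thesis using cK(2)[of t] t0 by (simp add: \<tau>_def algebra_simps)
      qed
      have ab: "\<bar>g t - b * t\<bar> < e * \<tau>"
      proof -
        have "- (e * \<tau>) < ln lam0" using big by linarith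
        moreover have "K + e / 2 * \<tau> < e * \<tau>" using big by linarith
        ultimately show ?thesis using h1 h2 by (simp add: abs_less_iff)
      qed
      have eq: "g t / (b * t) - 1 = - (g t - b * t) / \<tau>"
        using t0 b_neg by (simp add: \<tau>_def field_simps)
      have "dist (g t / (b * t)) 1 = \<bar>g t - b * t\<bar> / \<tau>"
        unfolding dist_real_def eq using tau0 by (simp add: abs_minus_commute)
      also have "\<dots> < e" using ab tau0 by (simp add: divide_less_eq mult.commute)
      finally show "dist (g t / (b * t)) 1 < e" .
    qed
    then show "\<forall>\<^sub>F t in at_top. dist (g t / (b * t)) 1 < e"
      unfolding eventually_at_top_linorder by blast
  qed
  have "g \<sim>[at_top] (\<lambda>t. b * t)" by (rule asymp_equivI') (use lim in simp)
  then show ?thesis unfolding g_def[abs_def] .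
qed

end
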